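(* Let $K\times X\to X$, $(k,x)\mapsto kx$, be a continuous action of a compact group $K$ on a locally compact space $X$, let $\mu\neq0$ be a $K$-invariant positive Radon measure on $X$, and let $\pi\colon K\to U(L^2(X,\mu))$ be given by $(\pi(k)f)(x)=f(k^{-1}x)$. If $\pi$ is a factor representation, then $kx=x$ for every $k\in K$ and every $x\in\operatorname{supp}\mu$.
   Context: A unitary representation $\pi$ is a factor representation if the von Neumann algebra $\pi(K)''$ has trivial center. $\operatorname{supp}\mu$ is the support of $\mu$. *)

theory Defs
  imports "HOL-Analysis.Analysis" "HOL-Algebra.Group"
begin

definition topological_group :: "('k, 'm) monoid_scheme \<Rightarrow> 'k topology \<Rightarrow> bool" where
  "topological_group G T \<longleftrightarrow> group G \<and> topspace T = carrier G \<and>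
     continuous_map (prod_topology T T) T (\<lambda>p. fst p \<otimes>\<^bsub>G\<^esub> snd p) \<and>
     continuous_map T T (\<lambda>k. inv\<^bsub>G\<^esub> k)"

definition continuous_action ::
  "('k, 'm) monoid_scheme \<Rightarrow> 'k topology \<Rightarrow> ('k \<Rightarrow> 'x::topological_space \<Rightarrow> 'x) \<Rightarrow> bool" where
  "continuous_action G T a \<longleftrightarrow>
     continuous_map (prod_topology T euclidean) euclidean (\<lambda>p. a (fst p) (snd p)) \<and>
     (\<forall>x. a \<one>\<^bsub>G\<^esub> x = x) \<and>
     (\<forall>g\<in>carrier G. \<forall>h\<in>carrier G. \<forall>x. a (g \<otimes>\<^bsub>G\<^esub> h) x = a g (a h x))"

definition radon_measure :: "'x::topological_space measure \<Rightarrow> bool" where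
  "radon_measure M \<longleftrightarrow> sets M = sets borel \<and>
     (\<forall>C. compact C \<longrightarrow> emeasure M C < \<infinity>) \<and>
     (\<forall>A\<in>sets borel. emeasure M A = (INF U\<in>{U. open U \<and> A \<subseteq> U}. emeasure M U)) \<and>
     (\<forall>U. open U \<longrightarrow> emeasure M U = (SUP C\<in>{C. compact C \<and> C \<subseteq> U}. emeasure M C))"

definition msupp :: "'x::topological_space measure \<Rightarrow> 'x set" where
  "msupp M = UNIV - \<Union>{U. open U \<and> emeasure M U = 0}"

definition invariant_measure ::
  "('k, 'm) monoid_scheme \<Rightarrow> ('k \<Rightarrow> 'x \<Rightarrow> 'x) \<Rightarrow> 'x measure \<Rightarrow> bool" where
  "invariant_measure G a M \<longleftrightarrow>
     (\<forall>k\<in>carrier G. a k \<in> M \<rightarrow>\<^sub>M M \<and> distr M M (a k) = M)"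

text \<open>L^2(X,mu): square-integrable complex functions (elements of L^2 are their
 classes modulo equality almost everywhere).\<close>
definition L2 :: "'x measure \<Rightarrow> ('x \<Rightarrow> complex) set" where
  "L2 M = {f. f \<in> borel_measurable M \<and> integrable M (\<lambda>x. (cmod (f x))\<^sup>2)}"

definition L2_norm :: "'x measure \<Rightarrow> ('x \<Rightarrow> complex) \<Rightarrow> real" where
  "L2_norm M f = sqrt (LINT x|M. (cmod (f x))\<^sup>2)"

text \<open>Bounded linear operators on L^2, represented on representatives; they must
 respect equality a.e.\<close>
definition bounded_op :: "'x measure \<Rightarrow> (('x \<Rightarrow> complex) \<Rightarrow> ('x \<Rightarrow> complex)) \<Rightarrow> bool" where
  "bounded_op M T \<longleftrightarrow>
     (\<forall>f\<in>L2 M. T f \<in> L2 M) \<and>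
     (\<forall>f\<in>L2 M. \<forall>g\<in>L2 M. (AE x in M. f x = g x) \<longrightarrow> (AE x in M. T f x = T g x)) \<and>
     (\<forall>f\<in>L2 M. \<forall>g\<in>L2 M. \<forall>c d. AE x in M. T (\<lambda>y. c * f y + d * g y) x = c * T f x + d * T g x) \<and>
     (\<exists>C. \<forall>f\<in>L2 M. L2_norm M (T f) \<le> C * L2_norm M f)"

definition op_eq :: "'x measure \<Rightarrow> (('x \<Rightarrow> complex) \<Rightarrow> ('x \<Rightarrow> complex)) \<Rightarrow>
    (('x \<Rightarrow> complex) \<Rightarrow> ('x \<Rightarrow> complex)) \<Rightarrow> bool" where
  "op_eq M S T \<longleftrightarrow> (\<forall>f\<in>L2 M. AE x in M. S f x = T f x)"

definition commutant :: "'x measure \<Rightarrow> (('x \<Rightarrow> complex) \<Rightarrow> ('x \<Rightarrow> complex)) set \<Rightarrow>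
    (('x \<Rightarrow> complex) \<Rightarrow> ('x \<Rightarrow> complex)) set" where
  "commutant M S = {T. bounded_op M T \<and> (\<forall>R\<in>S. op_eq M (T \<circ> R) (R \<circ> T))}"

text \<open>A set of operators generates a von Neumann algebra S'' with trivial center
 S'' \<inter> S''' (every central element is a scalar multiple of the identity).\<close>
definition factor_set :: "'x measure \<Rightarrow> (('x \<Rightarrow> complex) \<Rightarrow> ('x \<Rightarrow> complex)) set \<Rightarrow> bool" where
  "factor_set M S \<longleftrightarrow>
     (\<forall>T \<in> commutant M (commutant M S) \<inter> commutant M (commutant M (commutant M S)).
        \<exists>c::complex. op_eq M T (\<lambda>f x. c * f x))"

definition quasi_regular :: "('k, 'm) monoid_scheme \<Rightarrow> ('k \<Rightarrow> 'x \<Rightarrow> 'x) \<Rightarrow> 'k \<Rightarrow>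
    ('x \<Rightarrow> complex) \<Rightarrow> ('x \<Rightarrow> complex)" where
  "quasi_regular G a k f = (\<lambda>x. f (a (inv\<^bsub>G\<^esub> k) x))"

definition factor_representation ::
  "('k, 'm) monoid_scheme \<Rightarrow> 'x measure \<Rightarrow> ('k \<Rightarrow> ('x \<Rightarrow> complex) \<Rightarrow> ('x \<Rightarrow> complex)) \<Rightarrow> bool" where
  "factor_representation G M \<pi> \<longleftrightarrow> factor_set M (\<pi> ` carrier G)"

end

theory Submission
  imports Defs
begin


definition N2 :: "'x measure \<Rightarrow> ('x \<Rightarrow> complex) \<Rightarrow> real" where
  "N2 M f = (LINT x|M. (cmod (f x))^2)"
definition ip :: "'x measure \<Rightarrow> ('x \<Rightarrow> complex) \<Rightarrow> ('x \<Rightarrow> complex) \<Rightarrow> complex" where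
  "ip M f g = (LINT x|M. f x * cnj (g x))"

lemma borel_measurable_cnj'[measurable]:
  "f \<in> borel_measurable M \<Longrightarrow> (\<lambda>x. cnj (f x)) \<in> borel_measurable M"
  by (rule borel_measurable_continuous_on[where f=cnj]) (auto intro: continuous_intros)

lemma L2_meas: "f \<in> L2 M \<Longrightarrow> f \<in> borel_measurable M"
  by (auto simp: L2_def)
lemma L2_int: "f \<in> L2 M \<Longrightarrow> integrable M (\<lambda>x. (cmod (f x))^2)"
  by (auto simp: L2_def)

lemma sq_sum_le: "((x::real) + y)^2 \<le> 2*x^2 + 2*y^2"
proof -
  have "0 \<le> (x - y)^2" by simp
  thus ?thesis by (simp add: power2_diff power2_sum)
qed

lemma sq_bound: "(cmod (c*a + d*b))^2 \<le> 2*((cmod c)^2*(cmod a)^2) + 2*((cmod d)^2*(cmod b)^2)"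
proof -
  have "cmod (c*a + d*b) \<le> cmod c * cmod a + cmod d * cmod b"
    by (metis norm_mult norm_triangle_ineq)
  hence "(cmod (c*a + d*b))^2 \<le> (cmod c * cmod a + cmod d * cmod b)^2"
    by (simp add: power_mono)
  also have "\<dots> \<le> 2*((cmod c * cmod a)^2) + 2*((cmod d * cmod b)^2)"
    by (rule sq_sum_le)
  finally show ?thesis by (simp add: power_mult_distrib)
qed

lemma L2_lin: assumes "f \<in> L2 M" "g \<in> L2 M"
  shows "(\<lambda>x. c * f x + d * g x) \<in> L2 M"
proof -
  have [measurable]: "f \<in> borel_measurable M" "g \<in> borel_measurable M"
    using assms by (auto simp: L2_def)
  have "integrable M (\<lambda>x. 2*((cmod c)^2*(cmod (f x))^2) + 2*((cmod d)^2*(cmod (g x))^2))"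
    using assms by (auto simp: L2_def)
  hence "integrable M (\<lambda>x. (cmod (c * f x + d * g x))^2)"
    by (rule Bochner_Integration.integrable_bound) (auto intro!: AE_I2 order.trans[OF _ abs_ge_self] sq_bound)
  thus ?thesis by (auto simp: L2_def)
qed

lemma L2_add: "f \<in> L2 M \<Longrightarrow> g \<in> L2 M \<Longrightarrow> (\<lambda>x. f x + g x) \<in> L2 M"
  using L2_lin[of f M g 1 1] by simp
lemma L2_diff: "f \<in> L2 M \<Longrightarrow> g \<in> L2 M \<Longrightarrow> (\<lambda>x. f x - g x) \<in> L2 M"
  using L2_lin[of f M g 1 "-1"] by simp
lemma L2_scale: "f \<in> L2 M \<Longrightarrow> (\<lambda>x. c * f x) \<in> L2 M"
  using L2_lin[of f M f c 0] by simp
lemma L2_zero: "(\<lambda>x. 0) \<in> L2 M"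
  by (simp add: L2_def)

lemma ip_integrable: assumes "f \<in> L2 M" "g \<in> L2 M"
  shows "integrable M (\<lambda>x. f x * cnj (g x))"
proof -
  have [measurable]: "f \<in> borel_measurable M" "g \<in> borel_measurable M"
    using assms by (auto simp: L2_def)
  have int: "integrable M (\<lambda>x. (cmod (f x))^2 + (cmod (g x))^2)"
    using assms by (auto simp: L2_def)
  have bnd: "cmod (f x * cnj (g x)) \<le> (cmod (f x))^2 + (cmod (g x))^2" for x
  proof -
    have "cmod (f x) * cmod (g x) \<le> (cmod (f x))^2 + (cmod (g x))^2"
      using sum_squares_bound[of "cmod (f x)" "cmod (g x)"] mult_nonneg_nonneg[of "cmod (f x)" "cmod (g x)", OF norm_ge_zero norm_ge_zero]
      by linarith
    thus ?thesis by (simp add: norm_mult)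
  qed
  show ?thesis
    by (rule Bochner_Integration.integrable_bound[OF int]) (auto intro!: AE_I2 bnd)
qed

lemma absprod_integrable: assumes "f \<in> L2 M" "g \<in> L2 M"
  shows "integrable M (\<lambda>x. cmod (f x) * cmod (g x))"
  using integrable_norm[OF ip_integrable[OF assms]] by (simp add: norm_mult)

lemma N2_nonneg: "0 \<le> N2 M f"
  unfolding N2_def by (rule Bochner_Integration.integral_nonneg) simp

lemma N2_cong: assumes "f \<in> L2 M" "g \<in> L2 M" "AE x in M. f x = g x"
  shows "N2 M f = N2 M g"
proof -
  have [measurable]: "f \<in> borel_measurable M" "g \<in> borel_measurable M"
    using assms by (auto simp: L2_def)
  show ?thesis unfolding N2_def
    by (rule integral_cong_AE) (use assms(3) in auto)
qed

lemma ip_cong: assumes "f \<in> L2 M" "g \<in> L2 M" "AE x in M. f x = g x" "h \<in> L2 M"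
  shows "ip M f h = ip M g h"
proof -
  have [measurable]: "f \<in> borel_measurable M" "g \<in> borel_measurable M" "h \<in> borel_measurable M"
    using assms by (auto simp: L2_def)
  show ?thesis unfolding ip_def
    by (rule integral_cong_AE) (use assms(3) ip_integrable[OF assms(1,4)] ip_integrable[OF assms(2,4)] in auto)
qed

lemma N2_zero_iff: assumes "f \<in> L2 M"
  shows "N2 M f = 0 \<longleftrightarrow> (AE x in M. f x = 0)"
proof -
  have "N2 M f = 0 \<longleftrightarrow> (AE x in M. (cmod (f x))^2 = 0)"
    unfolding N2_def using L2_int[OF assms] by (intro integral_nonneg_eq_0_iff_AE) auto
  thus ?thesis by simp
qed

lemma N2_zero_ae: assumes "f \<in> L2 M" "g \<in> L2 M" "N2 M (\<lambda>x. f x - g x) = 0"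
  shows "AE x in M. f x = g x"
  using assms N2_zero_iff[OF L2_diff[OF assms(1,2)]] by simp

lemma ae_N2_zero: assumes "f \<in> L2 M" "g \<in> L2 M" "AE x in M. f x = g x"
  shows "N2 M (\<lambda>x. f x - g x) = 0"
  using assms N2_zero_iff[OF L2_diff[OF assms(1,2)]] by simp

lemma ip_self: "ip M f f = of_real (N2 M f)"
proof -
  have *: "f x * cnj (f x) = complex_of_real ((cmod (f x))^2)" for x
    by (simp only: complex_mult_cnj cmod_power2)
  show ?thesis unfolding ip_def N2_def by (simp only: * integral_complex_of_real)
qed

lemma N2_scale: "N2 M (\<lambda>x. c * f x) = (cmod c)^2 * N2 M f"
  unfolding N2_def by (simp add: norm_mult power_mult_distrib)

lemma sq_add_expand: "(cmod (a + b))^2 = (cmod a)^2 + (cmod b)^2 + 2 * Re (a * cnj b)"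
  unfolding cmod_power2 by (simp add: power2_eq_square algebra_simps)

lemma N2_add: assumes "f \<in> L2 M" "g \<in> L2 M"
  shows "N2 M (\<lambda>x. f x + g x) = N2 M f + N2 M g + 2 * Re (ip M f g)"
proof -
  have i1: "integrable M (\<lambda>x. (cmod (f x))^2)" "integrable M (\<lambda>x. (cmod (g x))^2)"
    using assms by (auto simp: L2_def)
  have i2: "integrable M (\<lambda>x. f x * cnj (g x))" using ip_integrable[OF assms] .
  have i3: "integrable M (\<lambda>x. 2 * Re (f x * cnj (g x)))"
    by (intro integrable_mult_right integrable_Re i2)
  have "N2 M (\<lambda>x. f x + g x) = (LINT x|M. (cmod (f x))^2 + (cmod (g x))^2 + 2 * Re (f x * cnj (g x)))"
    unfolding N2_def by (simp add: sq_add_expand)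
  also have "\<dots> = (LINT x|M. (cmod (f x))^2 + (cmod (g x))^2) + (LINT x|M. 2 * Re (f x * cnj (g x)))"
    by (rule Bochner_Integration.integral_add[OF Bochner_Integration.integrable_add[OF i1] i3])
  also have "(LINT x|M. (cmod (f x))^2 + (cmod (g x))^2) = N2 M f + N2 M g"
    unfolding N2_def by (rule Bochner_Integration.integral_add) (use i1 in auto)
  also have "(LINT x|M. 2 * Re (f x * cnj (g x))) = 2 * Re (ip M f g)"
    unfolding ip_def using i2 by (simp only: integral_mult_right_zero integral_Re)
  finally show ?thesis .
qed

lemma N2_diff: assumes "f \<in> L2 M" "g \<in> L2 M"
  shows "N2 M (\<lambda>x. f x - g x) = N2 M f + N2 M g - 2 * Re (ip M f g)"
proof -
  have "N2 M (\<lambda>x. f x - g x) = N2 M (\<lambda>x. f x + (-1) * g x)" by simp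
  also have "\<dots> = N2 M f + N2 M (\<lambda>x. (-1) * g x) + 2 * Re (ip M f (\<lambda>x. (-1) * g x))"
    by (rule N2_add[OF assms(1) L2_scale[OF assms(2)]])
  also have "ip M f (\<lambda>x. (-1) * g x) = - ip M f g" unfolding ip_def by simp
  also have "N2 M (\<lambda>x. (-1) * g x) = N2 M g" unfolding N2_def by simp
  finally show ?thesis by simp
qed

lemma parallelogram: assumes "f \<in> L2 M" "g \<in> L2 M"
  shows "N2 M (\<lambda>x. f x + g x) + N2 M (\<lambda>x. f x - g x) = 2 * N2 M f + 2 * N2 M g"
  using N2_add[OF assms] N2_diff[OF assms] by linarith

lemma N2_add_le: assumes "f \<in> L2 M" "g \<in> L2 M"
  shows "N2 M (\<lambda>x. f x + g x) \<le> 2 * N2 M f + 2 * N2 M g"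
  using parallelogram[OF assms] N2_nonneg[of M "\<lambda>x. f x - g x"] by linarith

lemma CS: assumes "f \<in> L2 M" "g \<in> L2 M"
  shows "cmod (ip M f g) \<le> sqrt (N2 M f) * sqrt (N2 M g)"
proof -
  define A where "A = N2 M f"
  define B where "B = N2 M g"
  define C where "C = (LINT x|M. cmod (f x) * cmod (g x))"
  have iA: "integrable M (\<lambda>x. (cmod (f x))^2)" and iB: "integrable M (\<lambda>x. (cmod (g x))^2)"
    using assms by (auto simp: L2_def)
  have iC: "integrable M (\<lambda>x. cmod (f x) * cmod (g x))" by (rule absprod_integrable[OF assms])
  have "cmod (ip M f g) \<le> (LINT x|M. norm (f x * cnj (g x)))"
    unfolding ip_def by (rule integral_norm_bound)
  also have "\<dots> = C" unfolding C_def by (simp add: norm_mult)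
  finally have c1: "cmod (ip M f g) \<le> C" .
  have C0: "0 \<le> C" unfolding C_def by (rule Bochner_Integration.integral_nonneg) simp
  have quad: "0 \<le> t^2 * A - 2 * t * C + B" for t :: real
  proof -
    have "0 \<le> (LINT x|M. (t * cmod (f x) - cmod (g x))^2)"
      by (rule Bochner_Integration.integral_nonneg) simp
    also have "(LINT x|M. (t * cmod (f x) - cmod (g x))^2)
        = (LINT x|M. t^2 * (cmod (f x))^2 + (- 2 * t) * (cmod (f x) * cmod (g x)) + (cmod (g x))^2)"
      by (rule Bochner_Integration.integral_cong) (auto simp: power2_diff power_mult_distrib)
    also have "\<dots> = (LINT x|M. t^2 * (cmod (f x))^2 + (- 2 * t) * (cmod (f x) * cmod (g x))) + (LINT x|M. (cmod (g x))^2)"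
      by (rule Bochner_Integration.integral_add) (use iA iB iC in auto)
    also have "(LINT x|M. t^2 * (cmod (f x))^2 + (- 2 * t) * (cmod (f x) * cmod (g x)))
        = (LINT x|M. t^2 * (cmod (f x))^2) + (LINT x|M. (- 2 * t) * (cmod (f x) * cmod (g x)))"
      by (rule Bochner_Integration.integral_add) (use iA iB iC in auto)
    finally show ?thesis unfolding A_def B_def C_def N2_def by simp
  qed
  have "C^2 \<le> A * B"
  proof (cases "A = 0")
    case True
    have "C \<le> 0"
    proof (rule ccontr)
      assume "\<not> C \<le> 0"
      hence "0 < C" by simp
      have "0 \<le> ((B+1)/(2*C))^2 * A - 2 * ((B+1)/(2*C)) * C + B" by (rule quad)
      also have "\<dots> = -1" using True \<open>0 < C\<close> by (simp add: field_simps)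
      finally show False by simp
    qed
    with C0 True show ?thesis by simp
  next
    case False
    have A0: "0 \<le> A" unfolding A_def by (rule N2_nonneg)
    with False have "0 < A" by simp
    have "0 \<le> (C/A)^2 * A - 2 * (C/A) * C + B" by (rule quad)
    also have "\<dots> = B - C^2 / A" using \<open>0 < A\<close> by (simp add: field_simps power2_eq_square)
    finally have "C^2 / A \<le> B" by simp
    thus ?thesis using \<open>0 < A\<close> by (simp add: field_simps mult.commute)
  qed
  hence "C \<le> sqrt (A * B)" by (rule real_le_rsqrt)
  with c1 show ?thesis unfolding A_def B_def by (simp add: real_sqrt_mult)
qed

lemma N2_tri: assumes "f \<in> L2 M" "g \<in> L2 M"
  shows "sqrt (N2 M (\<lambda>x. f x + g x)) \<le> sqrt (N2 M f) + sqrt (N2 M g)"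
proof -
  have "N2 M (\<lambda>x. f x + g x) = N2 M f + N2 M g + 2 * Re (ip M f g)" by (rule N2_add[OF assms])
  also have "Re (ip M f g) \<le> sqrt (N2 M f) * sqrt (N2 M g)"
    using CS[OF assms] complex_Re_le_cmod order_trans by blast
  hence "N2 M f + N2 M g + 2 * Re (ip M f g) \<le> (sqrt (N2 M f))^2 + (sqrt (N2 M g))^2 + 2 * (sqrt (N2 M f) * sqrt (N2 M g))"
    using N2_nonneg[of M f] N2_nonneg[of M g] by simp
  also have "\<dots> = (sqrt (N2 M f) + sqrt (N2 M g))^2" by (simp add: power2_sum)
  finally show ?thesis using N2_nonneg[of M f] N2_nonneg[of M g] by (intro real_le_lsqrt) auto
qed

lemma N2_tri_diff: assumes "f \<in> L2 M" "g \<in> L2 M" "h \<in> L2 M"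
  shows "sqrt (N2 M (\<lambda>x. f x - h x)) \<le> sqrt (N2 M (\<lambda>x. f x - g x)) + sqrt (N2 M (\<lambda>x. g x - h x))"
  using N2_tri[OF L2_diff[OF assms(1,2)] L2_diff[OF assms(2,3)]] by simp

lemma small_le: assumes "0 < (p::real)" "0 \<le> c" shows "c \<le> p * c^2 + 1/p"
proof -
  have "0 \<le> (p*c - 1)^2" by simp
  hence "2*p*c \<le> p^2*c^2 + 1" by (simp add: power2_diff power_mult_distrib)
  hence "2*c \<le> p*c^2 + 1/p" using assms(1) by (simp add: field_simps power2_eq_square)
  thus ?thesis using assms(2) by linarith
qed

lemma L2_complete:
  fixes s :: "nat \<Rightarrow> 'x \<Rightarrow> complex"
  assumes s: "\<And>n. s n \<in> L2 M"
    and C: "\<And>e. e > 0 \<Longrightarrow> \<exists>K. \<forall>m\<ge>K. \<forall>n\<ge>K. N2 M (\<lambda>x. s m x - s n x) < e"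
  shows "\<exists>h\<in>L2 M. \<forall>e>0. \<exists>K. \<forall>n\<ge>K. N2 M (\<lambda>x. s n x - h x) < e"
proof -
  have sm[measurable]: "\<And>n. s n \<in> borel_measurable M" using s L2_meas by blast
  have "\<exists>r. \<forall>n. (\<forall>i\<ge>r n. \<forall>j\<ge>r n. N2 M (\<lambda>x. s i x - s j x) < (1/8)^n) \<and> r n < r (Suc n)"
  proof (rule dependent_nat_choice)
    show "\<exists>x. \<forall>i\<ge>x. \<forall>j\<ge>x. N2 M (\<lambda>x. s i x - s j x) < (1/8)^0" using C[of 1] by auto
  next
    fix y0 n :: nat
    obtain K where K: "\<forall>m\<ge>K. \<forall>n'\<ge>K. N2 M (\<lambda>x. s m x - s n' x) < (1/8)^Suc n"
      using C[of "(1/8)^Suc n"] by auto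
    show "\<exists>y::nat. (\<forall>i\<ge>y. \<forall>j\<ge>y. N2 M (\<lambda>x. s i x - s j x) < (1/8)^Suc n) \<and> y0 < y"
      by (rule exI[of _ "max K (Suc y0)"]) (use K in auto)
  qed
  then obtain r where r: "\<And>n i j. i \<ge> r n \<Longrightarrow> j \<ge> r n \<Longrightarrow> N2 M (\<lambda>x. s i x - s j x) < (1/8)^n"
    and rmono: "\<And>n. r n < r (Suc n)" by blast
  have smono: "strict_mono r" using rmono strict_mono_Suc_iff by blast
  define d where "d j x = s (r (Suc j)) x - s (r j) x" for j x
  have dL2: "d j \<in> L2 M" for j unfolding d_def[abs_def] by (intro L2_diff s)
  have dm[measurable]: "d j \<in> borel_measurable M" for j using dL2 L2_meas by blast
  have dN: "N2 M (d j) < (1/8)^j" for j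
    unfolding d_def[abs_def] using r[of j "r (Suc j)" "r j"] rmono[of j] by simp
  define q where "q x = (\<Sum>j. ennreal (2^j * (cmod (d j x))^2))" for x
  have qm[measurable]: "q \<in> borel_measurable M" unfolding q_def by measurable
  have "(\<integral>\<^sup>+x. q x \<partial>M) = (\<Sum>j. \<integral>\<^sup>+x. ennreal (2^j * (cmod (d j x))^2) \<partial>M)"
    unfolding q_def by (rule nn_integral_suminf) measurable
  also have "\<dots> = (\<Sum>j. ennreal (2^j * N2 M (d j)))"
  proof (rule arg_cong[where f=suminf], rule ext)
    fix j
    have "integrable M (\<lambda>x. 2^j * (cmod (d j x))^2)"
      using L2_int[OF dL2[of j]] by (rule integrable_mult_right)
    hence "(\<integral>\<^sup>+x. ennreal (2^j * (cmod (d j x))^2) \<partial>M) = ennreal (LINT x|M. 2^j * (cmod (d j x))^2)"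
      by (rule nn_integral_eq_integral) auto
    thus "(\<integral>\<^sup>+x. ennreal (2^j * (cmod (d j x))^2) \<partial>M) = ennreal (2^j * N2 M (d j))"
      unfolding N2_def by simp
  qed
  also have "\<dots> \<le> (\<Sum>j. ennreal ((1/4)^j))"
  proof (rule suminf_le)
    fix j :: nat
    have "2^j * N2 M (d j) \<le> 2^j * (1/8)^j" using dN[of j] by (intro mult_left_mono) auto
    also have "\<dots> = (2 * (1/8))^j" by (rule power_mult_distrib[symmetric])
    also have "\<dots> = (1/4)^j" by simp
    finally show "ennreal (2^j * N2 M (d j)) \<le> ennreal ((1/4)^j)" by (rule ennreal_leI)
  qed auto
  also have "\<dots> = ennreal (\<Sum>j. (1/4)^j)"
    by (rule suminf_ennreal2) auto
  also have "\<dots> < \<infinity>" by simp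
  finally have "(\<integral>\<^sup>+x. q x \<partial>M) < \<infinity>" .
  hence qfin: "AE x in M. q x < \<infinity>"
    by (intro finite_nn_integral_imp_ae_finite) auto
  have conv: "convergent (\<lambda>n. s (r n) x)" if "q x < \<infinity>" for x
  proof -
    have "summable (\<lambda>j. 2^j * (cmod (d j x))^2)"
      using that unfolding q_def by (intro summable_suminf_not_top) auto
    moreover have "summable (\<lambda>j. 1 / (2::real)^j)"
      using summable_geometric[of "1/2::real"] by (simp add: power_one_over)
    ultimately have sg: "summable (\<lambda>j. 2^j * (cmod (d j x))^2 + 1 / 2^j)" by (rule summable_add)
    have bd: "norm (cmod (d j x)) \<le> 2^j * (cmod (d j x))^2 + 1 / 2^j" for j
    proof -
      have "cmod (d j x) \<le> 2^j * (cmod (d j x))^2 + 1 / 2^j" by (rule small_le) auto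
      thus ?thesis by (simp only: real_norm_def abs_norm_cancel)
    qed
    have "summable (\<lambda>j. cmod (d j x))"
      by (rule summable_comparison_test'[OF sg bd])
    hence "summable (\<lambda>j. d j x)" by (rule summable_norm_cancel)
    hence "(\<lambda>n. \<Sum>j<n. d j x) \<longlonglongrightarrow> (\<Sum>j. d j x)" by (rule summable_LIMSEQ)
    moreover have "(\<Sum>j<n. d j x) = s (r n) x - s (r 0) x" for n
      unfolding d_def using sum_lessThan_telescope[of "\<lambda>j. s (r j) x" n] by simp
    ultimately have "(\<lambda>n. s (r n) x - s (r 0) x) \<longlonglongrightarrow> (\<Sum>j. d j x)" by simp
    hence "(\<lambda>n. s (r n) x - s (r 0) x + s (r 0) x) \<longlonglongrightarrow> (\<Sum>j. d j x) + s (r 0) x"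
      by (intro tendsto_intros)
    thus ?thesis unfolding convergent_def by auto
  qed
  define h where "h x = lim (\<lambda>n. s (r n) x)" for x
  have hm[measurable]: "h \<in> borel_measurable M" unfolding h_def[abs_def] by measurable
  have hlim: "AE x in M. (\<lambda>n. s (r n) x) \<longlonglongrightarrow> h x"
    using qfin by eventually_elim (use conv in \<open>auto simp: h_def convergent_LIMSEQ_iff\<close>)
  have key: "(\<integral>\<^sup>+x. ennreal ((cmod (s m x - h x))^2) \<partial>M) \<le> ennreal e"
    if m: "\<forall>n\<ge>m. N2 M (\<lambda>x. s m x - s n x) < e" for m e
  proof -
    have "(\<integral>\<^sup>+x. ennreal ((cmod (s m x - h x))^2) \<partial>M)
        = (\<integral>\<^sup>+x. liminf (\<lambda>n. ennreal ((cmod (s m x - s (r n) x))^2)) \<partial>M)"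
    proof (rule nn_integral_cong_AE)
      show "AE x in M. ennreal ((cmod (s m x - h x))^2) = liminf (\<lambda>n. ennreal ((cmod (s m x - s (r n) x))^2))"
        using hlim
      proof eventually_elim
        case (elim x)
        have "(\<lambda>n. ennreal ((cmod (s m x - s (r n) x))^2)) \<longlonglongrightarrow> ennreal ((cmod (s m x - h x))^2)"
          by (intro tendsto_intros elim)
        thus ?case by (rule lim_imp_Liminf[OF trivial_limit_sequentially, symmetric])
      qed
    qed
    also have "\<dots> \<le> liminf (\<lambda>n. \<integral>\<^sup>+x. ennreal ((cmod (s m x - s (r n) x))^2) \<partial>M)"
      by (rule nn_integral_liminf) measurable
    also have "\<dots> \<le> liminf (\<lambda>n. ennreal e)"
    proof (rule Liminf_mono)
      show "\<forall>\<^sub>F n in sequentially. (\<integral>\<^sup>+x. ennreal ((cmod (s m x - s (r n) x))^2) \<partial>M) \<le> ennreal e"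
      proof (rule eventually_sequentiallyI[of m])
        fix n assume "m \<le> n"
        hence "m \<le> r n" using seq_suble[OF smono, of n] by simp
        have "(\<integral>\<^sup>+x. ennreal ((cmod (s m x - s (r n) x))^2) \<partial>M) = ennreal (N2 M (\<lambda>x. s m x - s (r n) x))"
          unfolding N2_def using L2_int[OF L2_diff[OF s s]]
          by (intro nn_integral_eq_integral) auto
        also have "\<dots> \<le> ennreal e" using m \<open>m \<le> r n\<close> by (intro ennreal_leI) auto
        finally show "(\<integral>\<^sup>+x. ennreal ((cmod (s m x - s (r n) x))^2) \<partial>M) \<le> ennreal e" .
      qed
    qed
    also have "\<dots> = ennreal e" by (simp add: Liminf_const)
    finally show ?thesis .
  qed
  have intd: "integrable M (\<lambda>x. (cmod (s m x - h x))^2)"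
    if m: "\<forall>n\<ge>m. N2 M (\<lambda>x. s m x - s n x) < e" for m e
  proof (rule integrableI_bounded)
    show "(\<integral>\<^sup>+x. ennreal (norm ((cmod (s m x - h x))^2)) \<partial>M) < \<infinity>"
      using key[OF m] by (simp add: order_le_less_trans)
  qed measurable
  have N2d: "N2 M (\<lambda>x. s m x - h x) \<le> e"
    if m: "\<forall>n\<ge>m. N2 M (\<lambda>x. s m x - s n x) < e" and e: "0 \<le> e" for m e
  proof -
    have "ennreal (N2 M (\<lambda>x. s m x - h x)) = (\<integral>\<^sup>+x. ennreal ((cmod (s m x - h x))^2) \<partial>M)"
      unfolding N2_def using intd[OF m] by (intro nn_integral_eq_integral[symmetric]) auto
    also have "\<dots> \<le> ennreal e" by (rule key[OF m])
    finally show ?thesis using e by (auto simp add: ennreal_le_iff2)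
  qed
  obtain K1 where K1: "\<forall>m\<ge>K1. \<forall>n\<ge>K1. N2 M (\<lambda>x. s m x - s n x) < 1" using C[of 1] by auto
  have dK: "(\<lambda>x. s K1 x - h x) \<in> L2 M"
    unfolding L2_def using intd[of K1 1] K1 by auto
  have hL2: "h \<in> L2 M"
    using L2_diff[OF s[of K1] dK] by simp
  show ?thesis
  proof (intro bexI[OF _ hL2] allI impI)
    fix e :: real assume "0 < e"
    obtain K where K: "\<forall>m\<ge>K. \<forall>n\<ge>K. N2 M (\<lambda>x. s m x - s n x) < e/2" using C[of "e/2"] \<open>0 < e\<close> by auto
    show "\<exists>K. \<forall>n\<ge>K. N2 M (\<lambda>x. s n x - h x) < e"
    proof (intro exI allI impI)
      fix n assume "K \<le> n"
      hence "N2 M (\<lambda>x. s n x - h x) \<le> e/2" using K \<open>0 < e\<close> by (intro N2d) auto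
      thus "N2 M (\<lambda>x. s n x - h x) < e" using \<open>0 < e\<close> by simp
    qed
  qed
qed



lemma ip_add1: assumes "f \<in> L2 M" "g \<in> L2 M" "h \<in> L2 M"
  shows "ip M (\<lambda>x. f x + g x) h = ip M f h + ip M g h"
proof -
  have "(\<lambda>x. (f x + g x) * cnj (h x)) = (\<lambda>x. f x * cnj (h x) + g x * cnj (h x))"
    by (simp add: distrib_right)
  thus ?thesis unfolding ip_def
    using Bochner_Integration.integral_add[OF ip_integrable[OF assms(1,3)] ip_integrable[OF assms(2,3)]]
    by simp
qed

lemma ip_diff1: assumes "f \<in> L2 M" "g \<in> L2 M" "h \<in> L2 M"
  shows "ip M (\<lambda>x. f x - g x) h = ip M f h - ip M g h"
proof -
  have "(\<lambda>x. (f x - g x) * cnj (h x)) = (\<lambda>x. f x * cnj (h x) - g x * cnj (h x))"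
    by (simp add: left_diff_distrib)
  thus ?thesis unfolding ip_def
    using Bochner_Integration.integral_diff[OF ip_integrable[OF assms(1,3)] ip_integrable[OF assms(2,3)]]
    by simp
qed

lemma ip_scale1: "ip M (\<lambda>x. c * f x) h = c * ip M f h"
  unfolding ip_def by (simp add: mult.assoc)

lemma ip_zero1: "ip M (\<lambda>x. 0) h = 0"
  unfolding ip_def by simp

lemma ip_cong2: assumes "f \<in> L2 M" "g \<in> L2 M" "g' \<in> L2 M" "AE x in M. g x = g' x"
  shows "ip M f g = ip M f g'"
proof -
  show ?thesis unfolding ip_def
    by (rule integral_cong_AE) (use assms(4) ip_integrable[OF assms(1,2)] ip_integrable[OF assms(1,3)] in auto)
qed

lemma CS2: assumes "f \<in> L2 M" "g \<in> L2 M"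
  shows "(cmod (ip M f g))^2 \<le> N2 M f * N2 M g"
proof -
  have "(cmod (ip M f g))^2 \<le> (sqrt (N2 M f) * sqrt (N2 M g))^2"
    using CS[OF assms] by (intro power_mono) auto
  also have "\<dots> = N2 M f * N2 M g"
    using N2_nonneg[of M f] N2_nonneg[of M g] by (simp add: power_mult_distrib)
  finally show ?thesis .
qed

lemma N2_swap: "N2 M (\<lambda>x. f x - g x) = N2 M (\<lambda>x. g x - f x)"
  unfolding N2_def by (simp add: norm_minus_commute)

locale qrs =
  fixes G :: "('k, 'm) monoid_scheme" and a :: "'k \<Rightarrow> 'x \<Rightarrow> 'x" and M :: "'x measure"
  assumes grp: "group G"
    and act_one: "\<And>x. a \<one>\<^bsub>G\<^esub> x = x"
    and act_mult: "\<And>g h x. g \<in> carrier G \<Longrightarrow> h \<in> carrier G \<Longrightarrow> a (g \<otimes>\<^bsub>G\<^esub> h) x = a g (a h x)"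
    and inv_meas: "invariant_measure G a M"
begin

lemma a_meas: "k \<in> carrier G \<Longrightarrow> a k \<in> M \<rightarrow>\<^sub>M M"
  using inv_meas by (auto simp: invariant_measure_def)
lemma a_distr: "k \<in> carrier G \<Longrightarrow> distr M M (a k) = M"
  using inv_meas by (auto simp: invariant_measure_def)

lemma comp_L2: assumes "k \<in> carrier G" "f \<in> L2 M" shows "(\<lambda>x. f (a k x)) \<in> L2 M"
proof -
  have fm: "f \<in> borel_measurable M" using assms L2_meas by blast
  have m: "(\<lambda>x. f (a k x)) \<in> borel_measurable M"
    by (rule measurable_compose[OF a_meas[OF assms(1)] fm])
  have "integrable (distr M M (a k)) (\<lambda>y. (cmod (f y))^2)"
    using a_distr[OF assms(1)] L2_int[OF assms(2)] by simp
  hence "integrable M (\<lambda>x. (cmod (f (a k x)))^2)"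
    using integrable_distr_eq[OF a_meas[OF assms(1)], of "\<lambda>y. (cmod (f y))^2"] fm by simp
  thus ?thesis using m by (simp add: L2_def)
qed

lemma comp_int:
  fixes g :: "'x \<Rightarrow> 'b::{banach, second_countable_topology}"
  assumes "k \<in> carrier G" "g \<in> borel_measurable M"
  shows "(LINT x|M. g (a k x)) = integral\<^sup>L M g"
  using integral_distr[OF a_meas[OF assms(1)] assms(2)] a_distr[OF assms(1)] by simp

lemma comp_ae: fixes f g :: "'x \<Rightarrow> complex" assumes "k \<in> carrier G" "f \<in> borel_measurable M" "g \<in> borel_measurable M"
    "AE x in M. f x = g x"
  shows "AE x in M. f (a k x) = g (a k x)"
proof -
  have [measurable]: "f \<in> borel_measurable M" "g \<in> borel_measurable M" using assms by auto
  have "{x \<in> space M. f x = g x} \<in> sets M" by (rule measurable_equality_set) fact+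
  hence "(AE y in distr M M (a k). f y = g y) \<longleftrightarrow> (AE x in M. f (a k x) = g (a k x))"
    by (rule AE_distr_iff[OF a_meas[OF assms(1)]])
  from this[unfolded a_distr[OF assms(1)]] assms(4) show ?thesis by blast
qed

lemma inv_closed': "k \<in> carrier G \<Longrightarrow> inv\<^bsub>G\<^esub> k \<in> carrier G"
  using grp by (rule group.inv_closed)

abbreviation pk where "pk k f \<equiv> quasi_regular G a k f"

lemma pk_L2: "k \<in> carrier G \<Longrightarrow> f \<in> L2 M \<Longrightarrow> pk k f \<in> L2 M"
  unfolding quasi_regular_def by (intro comp_L2 inv_closed')

lemma pk_ae: assumes "k \<in> carrier G" "f \<in> L2 M" "g \<in> L2 M" "AE x in M. f x = g x"
  shows "AE x in M. pk k f x = pk k g x"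
  unfolding quasi_regular_def using assms
  by (intro comp_ae inv_closed') (auto intro: L2_meas)

lemma pk_ip: assumes "k \<in> carrier G" "f \<in> L2 M" "g \<in> L2 M"
  shows "ip M (pk k f) (pk k g) = ip M f g"
proof -
  have "(\<lambda>x. f x * cnj (g x)) \<in> borel_measurable M"
    using ip_integrable[OF assms(2,3)] by (rule borel_measurable_integrable)
  thus ?thesis unfolding ip_def quasi_regular_def
    using comp_int[OF inv_closed'[OF assms(1)], of "\<lambda>x. f x * cnj (g x)"] by simp
qed

lemma pk_N2: assumes "k \<in> carrier G" "f \<in> L2 M"
  shows "N2 M (pk k f) = N2 M f"
proof -
  have "(\<lambda>x. (cmod (f x))^2) \<in> borel_measurable M"
    using L2_int[OF assms(2)] by (rule borel_measurable_integrable)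
  thus ?thesis unfolding N2_def quasi_regular_def
    using comp_int[OF inv_closed'[OF assms(1)], of "\<lambda>x. (cmod (f x))^2"] by simp
qed

definition Vs where "Vs = {v \<in> L2 M. \<forall>k\<in>carrier G. AE x in M. pk k v x = v x}"

inductive_set Ws :: "('x \<Rightarrow> complex) set" where
  W0: "(\<lambda>x. 0) \<in> Ws"
| Wgen: "f \<in> L2 M \<Longrightarrow> k \<in> carrier G \<Longrightarrow> (\<lambda>x. f x - pk k f x) \<in> Ws"
| Wadd: "w1 \<in> Ws \<Longrightarrow> w2 \<in> Ws \<Longrightarrow> (\<lambda>x. w1 x + w2 x) \<in> Ws"
| Wscale: "w \<in> Ws \<Longrightarrow> (\<lambda>x. c * w x) \<in> Ws"

definition clW where "clW = {h \<in> L2 M. \<forall>e>0. \<exists>w\<in>Ws. N2 M (\<lambda>x. h x - w x) < e}"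

lemma W_L2: "w \<in> Ws \<Longrightarrow> w \<in> L2 M"
  by (induction rule: Ws.induct) (auto intro: L2_zero L2_diff pk_L2 L2_add L2_scale)

lemma V_L2: "v \<in> Vs \<Longrightarrow> v \<in> L2 M"
  by (simp add: Vs_def)

lemma W_ortho: assumes "w \<in> Ws" "v \<in> Vs" shows "ip M w v = 0"
  using assms(1)
proof (induction rule: Ws.induct)
  case W0
  then show ?case by (rule ip_zero1)
next
  case (Wgen f k)
  have vL: "v \<in> L2 M" using assms(2) by (rule V_L2)
  have ae: "AE x in M. v x = pk k v x" using assms(2) Wgen by (auto simp: Vs_def)
  have "ip M (pk k f) v = ip M (pk k f) (pk k v)"
    by (rule ip_cong2[OF pk_L2[OF Wgen(2,1)] vL pk_L2[OF Wgen(2) vL] ae])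
  also have "\<dots> = ip M f v" by (rule pk_ip[OF Wgen(2,1) vL])
  finally show ?case using ip_diff1[OF Wgen(1) pk_L2[OF Wgen(2,1)] vL] by simp
next
  case (Wadd w1 w2)
  then show ?case using ip_add1[OF W_L2[OF Wadd(1)] W_L2[OF Wadd(2)] V_L2[OF assms(2)]] by simp
next
  case (Wscale w c)
  then show ?case by (simp add: ip_scale1)
qed

lemma W_clW: "w \<in> Ws \<Longrightarrow> w \<in> clW"
  unfolding clW_def using W_L2 by (auto intro!: bexI[of _ w] simp: N2_def)

lemma clW_L2: "h \<in> clW \<Longrightarrow> h \<in> L2 M"
  by (simp add: clW_def)

lemma clW_cong: assumes "h \<in> clW" "h' \<in> L2 M" "AE x in M. h x = h' x" shows "h' \<in> clW"
  unfolding clW_def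
proof (intro CollectI conjI allI impI assms(2))
  fix e :: real assume "0 < e"
  then obtain w where w: "w \<in> Ws" "N2 M (\<lambda>x. h x - w x) < e" using assms(1) by (auto simp: clW_def)
  have "N2 M (\<lambda>x. h' x - w x) = N2 M (\<lambda>x. h x - w x)"
    by (rule N2_cong[OF L2_diff[OF assms(2) W_L2[OF w(1)]] L2_diff[OF clW_L2[OF assms(1)] W_L2[OF w(1)]]])
       (use assms(3) in auto)
  thus "\<exists>w\<in>Ws. N2 M (\<lambda>x. h' x - w x) < e"
  proof -
    assume eq: "N2 M (\<lambda>x. h' x - w x) = N2 M (\<lambda>x. h x - w x)"
    show ?thesis by (rule bexI[OF _ w(1)]) (use eq w(2) in simp)
  qed
qed

lemma clW_lin: assumes "h1 \<in> clW" "h2 \<in> clW" shows "(\<lambda>x. c * h1 x + d * h2 x) \<in> clW"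
  unfolding clW_def
proof (intro CollectI conjI allI impI)
  show "(\<lambda>x. c * h1 x + d * h2 x) \<in> L2 M" by (intro L2_lin clW_L2 assms)
  fix e :: real assume e: "0 < e"
  define S where "S = (cmod c)^2 + (cmod d)^2 + 1"
  have S: "0 < S" unfolding S_def by (simp add: add_nonneg_pos)
  define t where "t = e / (4 * S)"
  have t: "0 < t" unfolding t_def using e S by simp
  obtain w1 where w1: "w1 \<in> Ws" "N2 M (\<lambda>x. h1 x - w1 x) < t" using assms(1) t by (auto simp: clW_def)
  obtain w2 where w2: "w2 \<in> Ws" "N2 M (\<lambda>x. h2 x - w2 x) < t" using assms(2) t by (auto simp: clW_def)
  have wW: "(\<lambda>x. c * w1 x + d * w2 x) \<in> Ws" by (intro Wadd Wscale w1(1) w2(1))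
  have L1: "(\<lambda>x. h1 x - w1 x) \<in> L2 M" by (intro L2_diff clW_L2 W_L2 assms w1)
  have L2': "(\<lambda>x. h2 x - w2 x) \<in> L2 M" by (intro L2_diff clW_L2 W_L2 assms w2)
  have eq: "(\<lambda>x. (c * h1 x + d * h2 x) - (c * w1 x + d * w2 x))
      = (\<lambda>x. c * (h1 x - w1 x) + d * (h2 x - w2 x))" by (simp add: algebra_simps)
  have "N2 M (\<lambda>x. c * (h1 x - w1 x) + d * (h2 x - w2 x))
      \<le> 2 * N2 M (\<lambda>x. c * (h1 x - w1 x)) + 2 * N2 M (\<lambda>x. d * (h2 x - w2 x))"
    by (rule N2_add_le[OF L2_scale[OF L1] L2_scale[OF L2']])
  also have "\<dots> = 2 * ((cmod c)^2 * N2 M (\<lambda>x. h1 x - w1 x)) + 2 * ((cmod d)^2 * N2 M (\<lambda>x. h2 x - w2 x))"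
    by (simp add: N2_scale)
  also have "\<dots> \<le> 2 * ((cmod c)^2 * t) + 2 * ((cmod d)^2 * t)"
    using w1(2) w2(2) by (intro add_mono mult_left_mono) auto
  also have "\<dots> = 2 * (((cmod c)^2 + (cmod d)^2) * t)" by (simp add: algebra_simps)
  also have "\<dots> \<le> 2 * (S * t)" unfolding S_def using t by (intro mult_left_mono mult_right_mono) auto
  also have "\<dots> = e / 2" unfolding t_def using S by simp
  also have "\<dots> < e" using e by simp
  finally show "\<exists>w\<in>Ws. N2 M (\<lambda>x. (c * h1 x + d * h2 x) - w x) < e"
    using wW eq by (intro bexI[of _ "\<lambda>x. c * w1 x + d * w2 x"]) auto
qed

lemma clW_diff: assumes "h1 \<in> clW" "h2 \<in> clW" shows "(\<lambda>x. h1 x - h2 x) \<in> clW"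
  using clW_lin[OF assms, of 1 "-1"] by simp

lemma clW_zero: "(\<lambda>x. 0) \<in> clW"
  by (rule W_clW[OF W0])

lemma clW_ortho: assumes "h \<in> clW" "v \<in> Vs" shows "ip M h v = 0"
proof (rule ccontr)
  assume ne: "ip M h v \<noteq> 0"
  define z where "z = cmod (ip M h v)"
  have z: "0 < z" unfolding z_def using ne by simp
  have vL: "v \<in> L2 M" using assms(2) by (rule V_L2)
  define e where "e = z^2 / (2 * (N2 M v + 1))"
  have Nv: "0 \<le> N2 M v" by (rule N2_nonneg)
  have e: "0 < e" unfolding e_def using z Nv by (simp add: add_nonneg_pos)
  obtain w where w: "w \<in> Ws" "N2 M (\<lambda>x. h x - w x) < e" using assms(1) e by (auto simp: clW_def)
  have hL: "h \<in> L2 M" using assms(1) by (rule clW_L2)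
  have wL: "w \<in> L2 M" using w(1) by (rule W_L2)
  have "ip M h v = ip M (\<lambda>x. h x - w x) v + ip M w v"
    using ip_diff1[OF hL wL vL] by simp
  also have "ip M w v = 0" by (rule W_ortho[OF w(1) assms(2)])
  finally have "z^2 \<le> N2 M (\<lambda>x. h x - w x) * N2 M v"
    unfolding z_def using CS2[OF L2_diff[OF hL wL] vL] by simp
  also have "\<dots> \<le> e * N2 M v" using w(2) Nv by (intro mult_right_mono) auto
  also have "\<dots> = z^2 * (N2 M v / (2 * (N2 M v + 1)))" unfolding e_def by simp
  also have "\<dots> \<le> z^2 * (1/2)"
    using Nv by (intro mult_left_mono) (auto simp: field_simps)
  finally show False using z by simp
qed

lemma V_lin: assumes "v1 \<in> Vs" "v2 \<in> Vs" shows "(\<lambda>x. c * v1 x + d * v2 x) \<in> Vs"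
  unfolding Vs_def
proof (intro CollectI conjI ballI)
  show "(\<lambda>x. c * v1 x + d * v2 x) \<in> L2 M" by (intro L2_lin V_L2 assms)
  fix k assume "k \<in> carrier G"
  hence "AE x in M. pk k v1 x = v1 x" "AE x in M. pk k v2 x = v2 x" using assms by (auto simp: Vs_def)
  thus "AE x in M. pk k (\<lambda>x. c * v1 x + d * v2 x) x = c * v1 x + d * v2 x"
    by eventually_elim (simp add: quasi_regular_def)
qed

lemma V_diff: assumes "v1 \<in> Vs" "v2 \<in> Vs" shows "(\<lambda>x. v1 x - v2 x) \<in> Vs"
  using V_lin[OF assms, of 1 "-1"] by simp

lemma V_cong: assumes "v \<in> Vs" "v' \<in> L2 M" "AE x in M. v x = v' x" shows "v' \<in> Vs"
  unfolding Vs_def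
proof (intro CollectI conjI ballI assms(2))
  fix k assume k: "k \<in> carrier G"
  have ae': "AE x in M. v' x = v x" using assms(3) by auto
  have "AE x in M. pk k v' x = pk k v x"
    by (rule pk_ae[OF k assms(2) V_L2[OF assms(1)] ae'])
  moreover have "AE x in M. pk k v x = v x" using assms(1) k by (auto simp: Vs_def)
  ultimately show "AE x in M. pk k v' x = v' x" using assms(3) by eventually_elim simp
qed


lemma proj_exists: assumes g: "g \<in> L2 M"
  shows "\<exists>b. b \<in> clW \<and> (\<forall>c\<in>clW. N2 M (\<lambda>x. g x - b x) \<le> N2 M (\<lambda>x. g x - c x))"
proof -
  define D where "D = (\<lambda>w. N2 M (\<lambda>x. g x - w x)) ` Ws"
  define d where "d = Inf D"
  have Dne: "D \<noteq> {}" unfolding D_def using W0 by blast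
  have Dbdd: "bdd_below D" unfolding D_def by (rule bdd_belowI[of _ 0]) (auto intro: N2_nonneg)
  have d_le: "d \<le> N2 M (\<lambda>x. g x - w x)" if "w \<in> Ws" for w
    unfolding d_def by (rule cInf_lower[OF _ Dbdd]) (use that D_def in auto)
  have d0: "0 \<le> d" unfolding d_def by (rule cInf_greatest[OF Dne]) (auto simp: D_def intro: N2_nonneg)
  have "\<forall>n. \<exists>w. w \<in> Ws \<and> N2 M (\<lambda>x. g x - w x) < d + 1 / real (Suc n)"
  proof
    fix n
    have "Inf D < d + 1 / real (Suc n)" unfolding d_def by simp
    from cInf_lessD[OF Dne this] show "\<exists>w. w \<in> Ws \<and> N2 M (\<lambda>x. g x - w x) < d + 1 / real (Suc n)"
      unfolding D_def by auto
  qed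
  then obtain w where w: "\<And>n. w n \<in> Ws" "\<And>n. N2 M (\<lambda>x. g x - w n x) < d + 1 / real (Suc n)"
    by metis
  have wL: "w n \<in> L2 M" for n using w(1) by (rule W_L2)
  have cauchy_est: "N2 M (\<lambda>x. w m x - w n x) \<le> 2 / real (Suc n) + 2 / real (Suc m)" for m n
  proof -
    define un where "un = (\<lambda>x. g x - w n x)"
    define um where "um = (\<lambda>x. g x - w m x)"
    have unL: "un \<in> L2 M" unfolding un_def by (intro L2_diff g wL)
    have umL: "um \<in> L2 M" unfolding um_def by (intro L2_diff g wL)
    have par: "N2 M (\<lambda>x. un x + um x) + N2 M (\<lambda>x. un x - um x) = 2 * N2 M un + 2 * N2 M um"
      by (rule parallelogram[OF unL umL])
    have mid: "(\<lambda>x. (1/2) * w n x + (1/2) * w m x) \<in> Ws" by (intro Wadd Wscale w(1))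
    have e1: "(\<lambda>x. un x + um x) = (\<lambda>x. 2 * (g x - ((1/2) * w n x + (1/2) * w m x)))"
      unfolding un_def um_def by (auto simp: algebra_simps)
    have "N2 M (\<lambda>x. un x + um x) = 4 * N2 M (\<lambda>x. g x - ((1/2) * w n x + (1/2) * w m x))"
      unfolding e1 N2_scale by simp
    hence ge: "4 * d \<le> N2 M (\<lambda>x. un x + um x)" using d_le[OF mid] by simp
    have e2: "(\<lambda>x. un x - um x) = (\<lambda>x. w m x - w n x)"
      unfolding un_def um_def by auto
    have "N2 M un < d + 1 / real (Suc n)" "N2 M um < d + 1 / real (Suc m)"
      using w(2) unfolding un_def um_def by auto
    thus ?thesis using par ge e2 by simp
  qed
  have "\<exists>h\<in>L2 M. \<forall>e>0. \<exists>K. \<forall>n\<ge>K. N2 M (\<lambda>x. w n x - h x) < e"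
  proof (rule L2_complete[OF wL])
    fix e :: real assume e: "0 < e"
    obtain K where K: "inverse (real (Suc K)) < e / 4" using reals_Archimedean[of "e/4"] e by auto
    show "\<exists>K. \<forall>m\<ge>K. \<forall>n\<ge>K. N2 M (\<lambda>x. w m x - w n x) < e"
    proof (intro exI allI impI)
      fix m n assume mn: "K \<le> m" "K \<le> n"
      have "1 / real (Suc n) \<le> 1 / real (Suc K)" "1 / real (Suc m) \<le> 1 / real (Suc K)"
        using mn by (auto simp: frac_le)
      hence "2 / real (Suc n) + 2 / real (Suc m) \<le> 4 * (1 / real (Suc K))" by simp
      also have "\<dots> < e" using K by (simp add: inverse_eq_divide)
      finally show "N2 M (\<lambda>x. w m x - w n x) < e" using cauchy_est[of m n] by simp
    qed
  qed
  then obtain b where bL: "b \<in> L2 M" and blim: "\<And>e. e > 0 \<Longrightarrow> \<exists>K. \<forall>n\<ge>K. N2 M (\<lambda>x. w n x - b x) < e"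
    by blast
  have bW: "b \<in> clW" unfolding clW_def
  proof (intro CollectI conjI allI impI bL)
    fix e :: real assume "0 < e"
    then obtain K where "\<forall>n\<ge>K. N2 M (\<lambda>x. w n x - b x) < e" using blim by blast
    hence "N2 M (\<lambda>x. b x - w K x) < e" by (simp add: N2_swap)
    thus "\<exists>w\<in>Ws. N2 M (\<lambda>x. b x - w x) < e" using w(1) by blast
  qed
  have lower: "d \<le> N2 M (\<lambda>x. g x - c x)" if c: "c \<in> clW" for c
  proof (rule ccontr)
    assume "\<not> d \<le> N2 M (\<lambda>x. g x - c x)"
    hence lt: "N2 M (\<lambda>x. g x - c x) < d" by simp
    define \<delta> where "\<delta> = sqrt d - sqrt (N2 M (\<lambda>x. g x - c x))"
    have \<delta>: "0 < \<delta>" unfolding \<delta>_def using lt by simp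
    have cc: "\<forall>e>0. \<exists>w\<in>Ws. N2 M (\<lambda>x. c x - w x) < e" using c by (simp add: clW_def)
    have "0 < \<delta>^2" using \<delta> by simp
    then obtain v where v: "v \<in> Ws" "N2 M (\<lambda>x. c x - v x) < \<delta>^2" using cc by blast
    have cL: "c \<in> L2 M" using c by (rule clW_L2)
    have vL: "v \<in> L2 M" using v(1) by (rule W_L2)
    have "sqrt (N2 M (\<lambda>x. g x - v x)) \<le> sqrt (N2 M (\<lambda>x. g x - c x)) + sqrt (N2 M (\<lambda>x. c x - v x))"
      by (rule N2_tri_diff[OF g cL vL])
    also have "sqrt (N2 M (\<lambda>x. c x - v x)) < \<delta>" using v(2) \<delta> by (intro real_less_lsqrt) auto
    finally have "sqrt (N2 M (\<lambda>x. g x - v x)) < sqrt d" unfolding \<delta>_def by simp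
    moreover have "sqrt d \<le> sqrt (N2 M (\<lambda>x. g x - v x))" using d_le[OF v(1)] by simp
    ultimately show False by simp
  qed
  have upper: "N2 M (\<lambda>x. g x - b x) \<le> d"
  proof (rule ccontr)
    assume "\<not> N2 M (\<lambda>x. g x - b x) \<le> d"
    hence lt: "d < N2 M (\<lambda>x. g x - b x)" by simp
    define \<delta> where "\<delta> = sqrt (N2 M (\<lambda>x. g x - b x)) - sqrt d"
    have \<delta>: "0 < \<delta>" unfolding \<delta>_def using lt by simp
    have \<delta>2: "0 < (\<delta>/2)^2" using \<delta> by simp
    obtain K1 where K1: "\<forall>n\<ge>K1. N2 M (\<lambda>x. w n x - b x) < (\<delta>/2)^2" using blim[OF \<delta>2] by blast
    obtain K2 where K2: "inverse (real (Suc K2)) < (\<delta>/2)^2" using reals_Archimedean[OF \<delta>2] by blast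
    define n where "n = max K1 K2"
    have n1: "N2 M (\<lambda>x. w n x - b x) < (\<delta>/2)^2" using K1 n_def by simp
    have "1 / real (Suc n) \<le> 1 / real (Suc K2)" unfolding n_def by (auto simp: frac_le)
    hence n2: "1 / real (Suc n) < (\<delta>/2)^2" using K2 by (simp add: inverse_eq_divide)
    have "sqrt (N2 M (\<lambda>x. g x - b x)) \<le> sqrt (N2 M (\<lambda>x. g x - w n x)) + sqrt (N2 M (\<lambda>x. w n x - b x))"
      by (rule N2_tri_diff[OF g wL bL])
    also have "sqrt (N2 M (\<lambda>x. w n x - b x)) < \<delta>/2" using n1 \<delta> by (intro real_less_lsqrt) auto
    also have "sqrt (N2 M (\<lambda>x. g x - w n x)) \<le> sqrt (d + 1 / real (Suc n))"
      using w(2)[of n] by simp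
    also have "\<dots> \<le> sqrt d + sqrt (1 / real (Suc n))" using d0 by (intro sqrt_add_le_add_sqrt) auto
    also have "sqrt (1 / real (Suc n)) < \<delta>/2" using n2 \<delta> by (intro real_less_lsqrt) auto
    finally have "sqrt (N2 M (\<lambda>x. g x - b x)) < sqrt d + \<delta>" by simp
    thus False unfolding \<delta>_def by simp
  qed
  show ?thesis using bW lower upper by (meson order_trans)
qed

definition Qp where "Qp g = (SOME b. b \<in> clW \<and> (\<forall>c\<in>clW. N2 M (\<lambda>x. g x - b x) \<le> N2 M (\<lambda>x. g x - c x)))"
definition Pp where "Pp g = (\<lambda>x. g x - Qp g x)"

lemma Qp: assumes "g \<in> L2 M"
  shows "Qp g \<in> clW" "\<And>c. c \<in> clW \<Longrightarrow> N2 M (\<lambda>x. g x - Qp g x) \<le> N2 M (\<lambda>x. g x - c x)"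
  using someI_ex[OF proj_exists[OF assms]] unfolding Qp_def[symmetric] by auto

lemma Pp_L2: assumes "g \<in> L2 M" shows "Pp g \<in> L2 M"
  unfolding Pp_def by (rule L2_diff[OF assms clW_L2[OF Qp(1)[OF assms]]])

lemma Pp_V: assumes g: "g \<in> L2 M" shows "Pp g \<in> Vs"
  unfolding Vs_def
proof (intro CollectI conjI ballI Pp_L2 g)
  fix k assume k: "k \<in> carrier G"
  define u where "u = Pp g"
  have uL: "u \<in> L2 M" unfolding u_def by (rule Pp_L2[OF g])
  have puL: "pk k u \<in> L2 M" by (rule pk_L2[OF k uL])
  define z where "z = (\<lambda>x. u x - pk k u x)"
  have zW: "z \<in> Ws" unfolding z_def by (rule Wgen[OF uL k])
  have cW: "(\<lambda>x. 1 * Qp g x + (1/2) * z x) \<in> clW" by (intro clW_lin Qp g W_clW zW)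
  have "N2 M (\<lambda>x. g x - Qp g x) \<le> N2 M (\<lambda>x. g x - (1 * Qp g x + (1/2) * z x))"
    by (rule Qp(2)[OF g cW])
  also have "(\<lambda>x. g x - (1 * Qp g x + (1/2) * z x)) = (\<lambda>x. (1/2) * (u x + pk k u x))"
    unfolding z_def u_def Pp_def by (auto simp: algebra_simps)
  also have "N2 M \<dots> = (1/4) * N2 M (\<lambda>x. u x + pk k u x)" by (subst N2_scale) (simp add: power2_eq_square)
  finally have "4 * N2 M u \<le> N2 M (\<lambda>x. u x + pk k u x)" unfolding u_def Pp_def by simp
  moreover have "N2 M (\<lambda>x. u x + pk k u x) + N2 M (\<lambda>x. u x - pk k u x) = 2 * N2 M u + 2 * N2 M (pk k u)"
    by (rule parallelogram[OF uL puL])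
  moreover have "N2 M (pk k u) = N2 M u" by (rule pk_N2[OF k uL])
  ultimately have "N2 M (\<lambda>x. u x - pk k u x) \<le> 0" by simp
  hence "N2 M (\<lambda>x. u x - pk k u x) = 0" using N2_nonneg[of M "\<lambda>x. u x - pk k u x"] by simp
  hence "AE x in M. u x = pk k u x" by (rule N2_zero_ae[OF uL puL])
  thus "AE x in M. pk k (Pp g) x = Pp g x" unfolding u_def by auto
qed

lemma decomp_unique: assumes g: "g \<in> L2 M" and v: "v \<in> Vs" and w: "w \<in> clW"
    and ae: "AE x in M. g x = v x + w x"
  shows "AE x in M. Pp g x = v x"
proof -
  define z where "z = (\<lambda>x. Pp g x - v x)"
  have zV: "z \<in> Vs" unfolding z_def by (intro V_diff Pp_V g v)
  have zL: "z \<in> L2 M" by (rule V_L2[OF zV])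
  have z'W: "(\<lambda>x. w x - Qp g x) \<in> clW" by (intro clW_diff w Qp g)
  have "AE x in M. w x - Qp g x = z x"
    using ae by eventually_elim (simp add: z_def Pp_def)
  hence zW: "z \<in> clW" by (rule clW_cong[OF z'W zL])
  have "ip M z z = 0" by (rule clW_ortho[OF zW zV])
  hence "N2 M z = 0" by (simp add: ip_self)
  hence "AE x in M. z x = 0" using N2_zero_iff[OF zL] by simp
  thus ?thesis by eventually_elim (simp add: z_def)
qed

lemma Pp_fix: assumes "v \<in> Vs" shows "AE x in M. Pp v x = v x"
  by (rule decomp_unique[OF V_L2[OF assms] assms clW_zero]) simp


lemma Pp_cong: assumes f: "f \<in> L2 M" and g: "g \<in> L2 M" and ae: "AE x in M. f x = g x"
  shows "AE x in M. Pp f x = Pp g x"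
proof (rule decomp_unique[OF f Pp_V[OF g] Qp(1)[OF g]])
  show "AE x in M. f x = Pp g x + Qp g x" using ae by eventually_elim (simp add: Pp_def)
qed

lemma Pp_lin: assumes f: "f \<in> L2 M" and g: "g \<in> L2 M"
  shows "AE x in M. Pp (\<lambda>y. c * f y + d * g y) x = c * Pp f x + d * Pp g x"
proof (rule decomp_unique[OF L2_lin[OF f g] V_lin[OF Pp_V[OF f] Pp_V[OF g]] clW_lin[OF Qp(1)[OF f] Qp(1)[OF g]]])
  show "AE x in M. c * f x + d * g x = (c * Pp f x + d * Pp g x) + (c * Qp f x + d * Qp g x)"
    by (rule AE_I2) (simp add: Pp_def algebra_simps)
qed

lemma L2_norm_N2: "L2_norm M f = sqrt (N2 M f)"
  by (simp add: L2_norm_def N2_def)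

lemma Pp_norm: assumes f: "f \<in> L2 M" shows "L2_norm M (Pp f) \<le> 1 * L2_norm M f"
proof -
  have "N2 M (Pp f) \<le> N2 M (\<lambda>x. f x - 0)"
    unfolding Pp_def by (rule Qp(2)[OF f clW_zero])
  thus ?thesis unfolding L2_norm_N2 by simp
qed

lemma Pp_bounded: "bounded_op M Pp"
  unfolding bounded_op_def
  using Pp_L2 Pp_cong Pp_lin Pp_norm by blast

abbreviation Sg where "Sg \<equiv> quasi_regular G a ` carrier G"

lemma Pp_comm_pk: assumes k: "k \<in> carrier G" and f: "f \<in> L2 M"
  shows "AE x in M. Pp (pk k f) x = pk k (Pp f) x"
proof -
  have A: "AE x in M. pk k (Pp f) x = Pp f x" using Pp_V[OF f] k by (auto simp: Vs_def)
  have wc: "(\<lambda>x. Qp f x - (f x - pk k f x)) \<in> clW"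
    by (rule clW_diff[OF Qp(1)[OF f] W_clW[OF Wgen[OF f k]]])
  have B: "AE x in M. Pp (pk k f) x = Pp f x"
  proof (rule decomp_unique[OF pk_L2[OF k f] Pp_V[OF f] wc])
    show "AE x in M. pk k f x = Pp f x + (Qp f x - (f x - pk k f x))"
      by (rule AE_I2) (simp add: Pp_def)
  qed
  from A B show ?thesis by eventually_elim simp
qed

lemma Pp_S': "Pp \<in> commutant M Sg"
  unfolding commutant_def op_eq_def
  using Pp_bounded Pp_comm_pk by auto

context
  fixes R assumes R: "R \<in> commutant M Sg"
begin

lemma Rb: "bounded_op M R" using R by (simp add: commutant_def)
lemma R_L2: "f \<in> L2 M \<Longrightarrow> R f \<in> L2 M" using Rb by (simp add: bounded_op_def)
lemma R_cong: "f \<in> L2 M \<Longrightarrow> g \<in> L2 M \<Longrightarrow> AE x in M. f x = g x \<Longrightarrow> AE x in M. R f x = R g x"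
  using Rb by (simp add: bounded_op_def)
lemma R_lin: "f \<in> L2 M \<Longrightarrow> g \<in> L2 M \<Longrightarrow> AE x in M. R (\<lambda>y. c * f y + d * g y) x = c * R f x + d * R g x"
  using Rb by (simp add: bounded_op_def)
lemma R_comm: "k \<in> carrier G \<Longrightarrow> f \<in> L2 M \<Longrightarrow> AE x in M. R (pk k f) x = pk k (R f) x"
  using R by (auto simp: commutant_def op_eq_def)

lemma R_add: "f \<in> L2 M \<Longrightarrow> g \<in> L2 M \<Longrightarrow> AE x in M. R (\<lambda>y. f y + g y) x = R f x + R g x"
  using R_lin[of f g 1 1] by simp
lemma R_diff: "f \<in> L2 M \<Longrightarrow> g \<in> L2 M \<Longrightarrow> AE x in M. R (\<lambda>y. f y - g y) x = R f x - R g x"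
  using R_lin[of f g 1 "-1"] by simp
lemma R_scale: "f \<in> L2 M \<Longrightarrow> AE x in M. R (\<lambda>y. c * f y) x = c * R f x"
  using R_lin[of f f c 0] by simp
lemma R_zero: "AE x in M. R (\<lambda>y. 0) x = 0"
  using R_lin[OF L2_zero L2_zero, of 0 0] by simp

lemma R_W: assumes "w \<in> Ws" shows "\<exists>w'\<in>Ws. AE x in M. R w x = w' x"
  using assms
proof (induction rule: Ws.induct)
  case W0
  show ?case by (rule bexI[OF _ Ws.W0]) (use R_zero in simp)
next
  case (Wgen f k)
  have "AE x in M. R (\<lambda>y. f y - pk k f y) x = R f x - R (pk k f) x"
    by (rule R_diff[OF Wgen(1) pk_L2[OF Wgen(2,1)]])
  moreover have "AE x in M. R (pk k f) x = pk k (R f) x" by (rule R_comm[OF Wgen(2,1)])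
  ultimately have "AE x in M. R (\<lambda>y. f y - pk k f y) x = R f x - pk k (R f) x"
    by eventually_elim simp
  moreover have "(\<lambda>x. R f x - pk k (R f) x) \<in> Ws" by (rule Ws.Wgen[OF R_L2[OF Wgen(1)] Wgen(2)])
  ultimately show ?case by (intro bexI[of _ "\<lambda>x. R f x - pk k (R f) x"]) simp_all
next
  case (Wadd w1 w2)
  obtain w1' where w1': "w1' \<in> Ws" "AE x in M. R w1 x = w1' x" using Wadd.IH(1) by blast
  obtain w2' where w2': "w2' \<in> Ws" "AE x in M. R w2 x = w2' x" using Wadd.IH(2) by blast
  have "AE x in M. R (\<lambda>y. w1 y + w2 y) x = R w1 x + R w2 x"
    by (rule R_add[OF W_L2[OF Wadd(1)] W_L2[OF Wadd(2)]])
  with w1'(2) w2'(2) have "AE x in M. R (\<lambda>y. w1 y + w2 y) x = w1' x + w2' x"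
    by eventually_elim simp
  thus ?case using Ws.Wadd[OF w1'(1) w2'(1)] by (intro bexI[of _ "\<lambda>x. w1' x + w2' x"]) simp_all
next
  case (Wscale w c)
  obtain w' where w': "w' \<in> Ws" "AE x in M. R w x = w' x" using Wscale.IH by blast
  have "AE x in M. R (\<lambda>y. c * w y) x = c * R w x"
    by (rule R_scale[OF W_L2[OF Wscale(1)]])
  with w'(2) have "AE x in M. R (\<lambda>y. c * w y) x = c * w' x"
    by eventually_elim simp
  thus ?case using Ws.Wscale[OF w'(1)] by (intro bexI[of _ "\<lambda>x. c * w' x"]) simp_all
qed

lemma R_cont: "\<exists>C\<ge>0. \<forall>f\<in>L2 M. \<forall>g\<in>L2 M. N2 M (\<lambda>x. R f x - R g x) \<le> C * N2 M (\<lambda>x. f x - g x)"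
proof -
  obtain C0 where C0: "\<And>f. f \<in> L2 M \<Longrightarrow> L2_norm M (R f) \<le> C0 * L2_norm M f"
    using Rb unfolding bounded_op_def by blast
  have main: "N2 M (R h) \<le> C0^2 * N2 M h" if h: "h \<in> L2 M" for h
  proof -
    have "sqrt (N2 M (R h)) \<le> C0 * sqrt (N2 M h)" using C0[OF h] by (simp add: L2_norm_N2)
    also have "\<dots> \<le> \<bar>C0\<bar> * sqrt (N2 M h)" using N2_nonneg[of M h] by (intro mult_right_mono) auto
    finally have "(sqrt (N2 M (R h)))^2 \<le> (\<bar>C0\<bar> * sqrt (N2 M h))^2"
      using N2_nonneg[of M "R h"] by (intro power_mono) auto
    thus ?thesis using N2_nonneg[of M "R h"] N2_nonneg[of M h] by (simp add: power_mult_distrib)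
  qed
  show ?thesis
  proof (intro exI[of _ "C0^2"] conjI ballI)
    fix f g assume f: "f \<in> L2 M" and g: "g \<in> L2 M"
    have "N2 M (\<lambda>x. R f x - R g x) = N2 M (R (\<lambda>y. f y - g y))"
    proof (rule N2_cong[OF L2_diff[OF R_L2[OF f] R_L2[OF g]] R_L2[OF L2_diff[OF f g]]])
      show "AE x in M. R f x - R g x = R (\<lambda>y. f y - g y) x"
        using R_diff[OF f g] by auto
    qed
    also have "\<dots> \<le> C0^2 * N2 M (\<lambda>x. f x - g x)" by (rule main[OF L2_diff[OF f g]])
    finally show "N2 M (\<lambda>x. R f x - R g x) \<le> C0^2 * N2 M (\<lambda>x. f x - g x)" .
  qed simp
qed

lemma R_clW: assumes h: "h \<in> clW" shows "R h \<in> clW"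
  unfolding clW_def
proof (intro CollectI conjI allI impI)
  have hL: "h \<in> L2 M" using h by (rule clW_L2)
  show RhL: "R h \<in> L2 M" by (rule R_L2[OF hL])
  fix e :: real assume e: "0 < e"
  obtain C where C: "C \<ge> 0" "\<And>f g. f \<in> L2 M \<Longrightarrow> g \<in> L2 M \<Longrightarrow> N2 M (\<lambda>x. R f x - R g x) \<le> C * N2 M (\<lambda>x. f x - g x)"
    using R_cont by blast
  have t: "0 < e / (C + 1)" using e C by simp
  have hh: "\<forall>e>0. \<exists>w\<in>Ws. N2 M (\<lambda>x. h x - w x) < e" using h by (simp add: clW_def)
  obtain w where w: "w \<in> Ws" "N2 M (\<lambda>x. h x - w x) < e / (C + 1)"
    using hh t by blast
  have wL: "w \<in> L2 M" using w(1) by (rule W_L2)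
  obtain w' where w': "w' \<in> Ws" "AE x in M. R w x = w' x" using R_W[OF w(1)] by blast
  have w'L: "w' \<in> L2 M" using w'(1) by (rule W_L2)
  have ae: "AE x in M. R h x - w' x = R h x - R w x" using w'(2) by eventually_elim simp
  have "N2 M (\<lambda>x. R h x - w' x) = N2 M (\<lambda>x. R h x - R w x)"
    by (rule N2_cong[OF L2_diff[OF RhL w'L] L2_diff[OF RhL R_L2[OF wL]] ae])
  also have "\<dots> \<le> C * N2 M (\<lambda>x. h x - w x)" by (rule C(2)[OF hL wL])
  also have "\<dots> \<le> C * (e / (C + 1))" using w(2) C(1) by (intro mult_left_mono) auto
  also have "\<dots> < e" using C(1) e by (simp add: field_simps)
  finally show "\<exists>w\<in>Ws. N2 M (\<lambda>x. R h x - w x) < e" using w'(1) by blast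
qed

lemma R_V: assumes v: "v \<in> Vs" shows "R v \<in> Vs"
proof -
  have vL: "v \<in> L2 M" using v by (rule V_L2)
  have "AE x in M. pk k (R v) x = R v x" if k: "k \<in> carrier G" for k
  proof -
    have pv: "AE x in M. pk k v x = v x" using v k unfolding Vs_def by blast
    have rc: "AE x in M. R (pk k v) x = pk k (R v) x" by (rule R_comm[OF k vL])
    have rv: "AE x in M. R (pk k v) x = R v x"
      by (rule R_cong[OF pk_L2[OF k vL] vL pv])
    from rc rv show ?thesis by eventually_elim simp
  qed
  thus ?thesis unfolding Vs_def using R_L2[OF vL] by blast
qed

lemma R_Pp: assumes f: "f \<in> L2 M" shows "AE x in M. Pp (R f) x = R (Pp f) x"
proof (rule decomp_unique[OF R_L2[OF f] R_V[OF Pp_V[OF f]] R_clW[OF Qp(1)[OF f]]])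
  have e: "(\<lambda>y. Pp f y + Qp f y) = f" by (simp add: Pp_def)
  show "AE x in M. R f x = R (Pp f) x + R (Qp f) x"
    using R_add[OF Pp_L2[OF f] clW_L2[OF Qp(1)[OF f]]] unfolding e .
qed

end

lemma Pp_S'': "Pp \<in> commutant M (commutant M Sg)"
proof -
  have "op_eq M (Pp \<circ> R) (R \<circ> Pp)" if R: "R \<in> commutant M Sg" for R
    unfolding op_eq_def comp_def using R_Pp[OF R] by blast
  hence "\<forall>R\<in>commutant M Sg. op_eq M (Pp \<circ> R) (R \<circ> Pp)" by blast
  thus ?thesis using Pp_bounded by (simp add: commutant_def[of M "commutant M Sg"])
qed

lemma Pp_S''': "Pp \<in> commutant M (commutant M (commutant M Sg))"
proof -
  have "op_eq M (Pp \<circ> U) (U \<circ> Pp)" if U: "U \<in> commutant M (commutant M Sg)" for U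
  proof -
    have "\<forall>R\<in>commutant M Sg. op_eq M (U \<circ> R) (R \<circ> U)"
      using U unfolding commutant_def[of M "commutant M Sg"] by blast
    hence "op_eq M (U \<circ> Pp) (Pp \<circ> U)" using Pp_S' by blast
    show ?thesis unfolding op_eq_def
    proof
      fix f assume "f \<in> L2 M"
      with \<open>op_eq M (U \<circ> Pp) (Pp \<circ> U)\<close> have "AE x in M. (U \<circ> Pp) f x = (Pp \<circ> U) f x"
        by (simp add: op_eq_def)
      thus "AE x in M. (Pp \<circ> U) f x = (U \<circ> Pp) f x" by eventually_elim simp
    qed
  qed
  thus ?thesis using Pp_bounded by (simp add: commutant_def[of M "commutant M (commutant M Sg)"])
qed

lemma factor_dich: assumes "factor_set M Sg"
  shows "(\<forall>f\<in>L2 M. f \<in> Vs) \<or> (\<forall>v\<in>Vs. AE x in M. v x = 0)"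
proof -
  have "\<exists>c::complex. op_eq M Pp (\<lambda>f x. c * f x)"
    by (rule bspec[OF assms[unfolded factor_set_def] IntI[OF Pp_S'' Pp_S''']])
  then obtain c :: complex where c: "op_eq M Pp (\<lambda>f x. c * f x)" by blast
  hence c': "\<And>f. f \<in> L2 M \<Longrightarrow> AE x in M. Pp f x = c * f x" by (simp add: op_eq_def)
  show ?thesis
  proof (cases "c = 0")
    case True
    have "AE x in M. v x = 0" if v: "v \<in> Vs" for v
      using Pp_fix[OF v] c'[OF V_L2[OF v]] by eventually_elim (simp add: True)
    thus ?thesis by blast
  next
    case False
    have "f \<in> Vs" if f: "f \<in> L2 M" for f
    proof (rule V_cong[OF V_lin[OF Pp_V[OF f] Pp_V[OF f], of "1/c" 0] f])
      show "AE x in M. 1 / c * Pp f x + 0 * Pp f x = f x"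
        using c'[OF f] by eventually_elim (simp add: False)
    qed
    thus ?thesis by blast
  qed
qed

end

lemma ind_L2: assumes sM: "sets M = sets borel" and A: "A \<in> sets borel" and fin: "emeasure M A < \<infinity>"
  shows "(\<lambda>x. indicator A x :: complex) \<in> L2 M"
proof -
  have spM: "space M = UNIV" using sets_eq_imp_space_eq[OF sM] by simp
  have AM: "A \<in> sets M" using A sM by simp
  have m: "(\<lambda>x. indicator A x :: complex) \<in> borel_measurable M"
    using AM by (rule borel_measurable_indicator)
  have e: "(\<lambda>x. (cmod (indicator A x :: complex))^2) = (indicator A :: 'a \<Rightarrow> real)"
    by (rule ext) (simp add: indicator_def)
  have "integrable M (indicator A :: 'a \<Rightarrow> real)"
    unfolding integrable_indicator_iff using AM fin spM by simp
  thus ?thesis using m e by (simp add: L2_def)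
qed

theorem lemma2p8:
  fixes G :: "('k, 'm) monoid_scheme" and T :: "'k topology"
    and a :: "'k \<Rightarrow> 'x::t2_space \<Rightarrow> 'x" and M :: "'x measure"
  assumes "topological_group G T" and "compact_space T" and "Hausdorff_space T"
    and "locally_compact_space (euclidean :: 'x topology)"
    and "continuous_action G T a"
    and "radon_measure M" and "emeasure M (space M) \<noteq> 0"
    and "invariant_measure G a M"
    and "factor_representation G M (quasi_regular G a)"
  shows "\<forall>k\<in>carrier G. \<forall>x\<in>msupp M. a k x = x"
proof -
  have grp: "group G" and topT: "topspace T = carrier G"
    using assms(1) by (auto simp: topological_group_def)
  have cont: "continuous_map (prod_topology T euclidean) euclidean (\<lambda>p. a (fst p) (snd p))"
    and one: "\<And>x. a \<one>\<^bsub>G\<^esub> x = x"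
    and mult: "\<And>g h x. g \<in> carrier G \<Longrightarrow> h \<in> carrier G \<Longrightarrow> a (g \<otimes>\<^bsub>G\<^esub> h) x = a g (a h x)"
    using assms(5) by (auto simp: continuous_action_def)
  have sM: "sets M = sets borel" and cfin: "\<And>C. compact C \<Longrightarrow> emeasure M C < \<infinity>"
    using assms(6) by (auto simp: radon_measure_def)
  have spM: "space M = UNIV" using sets_eq_imp_space_eq[OF sM] by simp
  interpret Q: qrs G a M
    unfolding qrs_def using grp one mult assms(8) by blast
  have dich: "(\<forall>f\<in>L2 M. f \<in> Q.Vs) \<or> (\<forall>v\<in>Q.Vs. AE x in M. v x = 0)"
    using Q.factor_dich assms(9) by (simp add: factor_representation_def)
  show ?thesis
  proof (rule ccontr)
    assume "\<not> ?thesis"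
    then obtain k0 x0 where k0: "k0 \<in> carrier G" and x0: "x0 \<in> msupp M" and ne: "a k0 x0 \<noteq> x0"
      by blast
    obtain U W where UW: "open U" "open W" "x0 \<in> U" "a k0 x0 \<in> W" "U \<inter> W = {}"
      using hausdorff[OF ne[symmetric]] by blast
    have ck: "continuous_map euclidean euclidean (a k0)"
    proof -
      have "continuous_map euclidean (prod_topology T euclidean) (\<lambda>x. (k0, x))"
        by (rule continuous_map_pairedI) (auto simp: continuous_map_const topT k0 continuous_map_id[unfolded id_def])
      from continuous_map_compose[OF this cont] show ?thesis by (simp add: o_def)
    qed
    have openpre: "open {x. a k0 x \<in> W}"
      using openin_continuous_map_preimage[OF ck, of W] UW(2) by simp
    obtain U0 N where U0N: "open U0" "compact N" "x0 \<in> U0" "U0 \<subseteq> N"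
    proof -
      have "\<forall>x::'x. \<exists>U. open U \<and> (\<exists>K. compact K \<and> x \<in> U \<and> U \<subseteq> K)"
        using assms(4) unfolding locally_compact_space_def by simp
      hence "\<exists>U. open U \<and> (\<exists>K. compact K \<and> x0 \<in> U \<and> U \<subseteq> K)" by blast
      thus ?thesis using that by blast
    qed
    define U' where "U' = U \<inter> U0 \<inter> {x. a k0 x \<in> W}"
    have U'open: "open U'" unfolding U'_def using UW(1) U0N(1) openpre by auto
    have x0U': "x0 \<in> U'" unfolding U'_def using UW U0N by auto
    have U'sub: "U' \<subseteq> N" unfolding U'_def using U0N by auto
    have U'pos: "emeasure M U' \<noteq> 0"
    proof
      assume "emeasure M U' = 0"
      hence "x0 \<in> \<Union>{U. open U \<and> emeasure M U = 0}" using U'open x0U' by blast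
      thus False using x0 by (simp add: msupp_def)
    qed
    have Nb: "N \<in> sets borel" using compact_imp_closed[OF U0N(2)] by (rule borel_closed)
    have U'b: "U' \<in> sets borel" using U'open by (rule borel_open)
    have U'fin: "emeasure M U' < \<infinity>"
      using emeasure_mono[OF U'sub, of M] Nb sM cfin[OF U0N(2)] by (simp add: order_le_less_trans)
    have fL2: "(\<lambda>x. indicator U' x :: complex) \<in> L2 M" by (rule ind_L2[OF sM U'b U'fin])
    have null: "emeasure M A = 0" if A: "A \<in> sets borel" and ae: "AE x in M. x \<notin> A" for A
    proof -
      have "A \<in> sets M" using A sM by simp
      moreover have "{x \<in> space M. \<not> x \<notin> A} = A" using spM by auto
      ultimately show ?thesis using AE_iff_measurable[of A M "\<lambda>x. x \<notin> A"] ae by simp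
    qed
    from dich show False
    proof
      assume allV: "\<forall>f\<in>L2 M. f \<in> Q.Vs"
      have ik: "inv\<^bsub>G\<^esub> k0 \<in> carrier G" using grp k0 by simp
      have ae: "AE x in M. quasi_regular G a (inv\<^bsub>G\<^esub> k0) (\<lambda>x. indicator U' x :: complex) x = indicator U' x"
        using allV fL2 ik unfolding Q.Vs_def by blast
      have pk: "quasi_regular G a (inv\<^bsub>G\<^esub> k0) (\<lambda>x. indicator U' x :: complex) x = indicator U' (a k0 x)" for x
        by (simp add: quasi_regular_def group.inv_inv[OF grp k0])
      have out: "a k0 x \<notin> U'" if "x \<in> U'" for x
        using that UW(5) unfolding U'_def by auto
      have "AE x in M. x \<notin> U'"
        using ae
      proof eventually_elim
        case (elim x)
        show ?case
        proof
          assume xU: "x \<in> U'"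
          have "(indicator U' (a k0 x) :: complex) = indicator U' x" using elim pk[of x] by simp
          thus False using xU out[OF xU] by (simp add: indicator_def)
        qed
      qed
      hence "emeasure M U' = 0" by (rule null[OF U'b])
      thus False using U'pos by simp
    next
      assume allZ: "\<forall>v\<in>Q.Vs. AE x in M. v x = 0"
      define E where "E = (\<lambda>p. a (fst p) (snd p)) ` (carrier G \<times> N)"
      have "compactin T (carrier G)" using assms(2) topT by (simp add: compact_space_def)
      hence "compactin (prod_topology T euclidean) (carrier G \<times> N)"
        using U0N(2) by (simp add: compactin_Times)
      hence "compactin euclidean E" unfolding E_def by (rule image_compactin[OF _ cont])
      hence Ecpt: "compact E" by simp
      have NE: "N \<subseteq> E"
      proof
        fix y assume "y \<in> N"
        hence p: "(\<one>\<^bsub>G\<^esub>, y) \<in> carrier G \<times> N" using grp by (simp add: group.is_monoid monoid.one_closed)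
        have "y = (\<lambda>p. a (fst p) (snd p)) (\<one>\<^bsub>G\<^esub>, y)" using one[of y] by simp
        thus "y \<in> E" unfolding E_def using p by (rule image_eqI)
      qed
      have Eb: "E \<in> sets borel" using compact_imp_closed[OF Ecpt] by (rule borel_closed)
      have Efin: "emeasure M E < \<infinity>" by (rule cfin[OF Ecpt])
      have vL2: "(\<lambda>x. indicator E x :: complex) \<in> L2 M" by (rule ind_L2[OF sM Eb Efin])
      have Einv: "a k x \<in> E" if k: "k \<in> carrier G" and x: "x \<in> E" for k x
      proof -
        from x obtain p where p: "x = a (fst p) (snd p)" "p \<in> carrier G \<times> N"
          unfolding E_def by (rule imageE)
        define j where "j = fst p"
        define y where "y = snd p"
        have jy: "j \<in> carrier G" "y \<in> N" "x = a j y" using p unfolding j_def y_def by (auto simp: mem_Times_iff)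
        have "a k x = a (k \<otimes>\<^bsub>G\<^esub> j) y" using mult[OF k jy(1)] jy(3) by simp
        moreover have "k \<otimes>\<^bsub>G\<^esub> j \<in> carrier G" using grp k jy(1) by (simp add: group.is_monoid monoid.m_closed)
        moreover have "(k \<otimes>\<^bsub>G\<^esub> j, y) \<in> carrier G \<times> N" using calculation(2) jy(2) by simp
        ultimately show ?thesis unfolding E_def by (intro image_eqI[of _ _ "(k \<otimes>\<^bsub>G\<^esub> j, y)"]) simp_all
      qed
      have Eiff: "a (inv\<^bsub>G\<^esub> k) x \<in> E \<longleftrightarrow> x \<in> E" if k: "k \<in> carrier G" for k x
      proof
        have ik: "inv\<^bsub>G\<^esub> k \<in> carrier G" using grp k by simp
        assume "a (inv\<^bsub>G\<^esub> k) x \<in> E"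
        hence "a k (a (inv\<^bsub>G\<^esub> k) x) \<in> E" by (rule Einv[OF k])
        moreover have "a k (a (inv\<^bsub>G\<^esub> k) x) = x"
          using mult[OF k ik, of x, symmetric] group.r_inv[OF grp k] one by simp
        ultimately show "x \<in> E" by simp
      next
        have ik: "inv\<^bsub>G\<^esub> k \<in> carrier G" using grp k by simp
        assume "x \<in> E"
        thus "a (inv\<^bsub>G\<^esub> k) x \<in> E" by (rule Einv[OF ik])
      qed
      have vV: "(\<lambda>x. indicator E x :: complex) \<in> Q.Vs"
        unfolding Q.Vs_def
      proof (intro CollectI conjI ballI vL2)
        fix k assume k: "k \<in> carrier G"
        show "AE x in M. quasi_regular G a k (\<lambda>x. indicator E x :: complex) x = indicator E x"
          by (rule AE_I2) (simp add: quasi_regular_def indicator_def Eiff[OF k])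
      qed
      have "AE x in M. (indicator E x :: complex) = 0" using allZ vV by blast
      hence "AE x in M. x \<notin> E" by eventually_elim (simp add: indicator_def split: if_splits)
      hence "emeasure M E = 0" by (rule null[OF Eb])
      moreover have "emeasure M U' \<le> emeasure M E"
        using emeasure_mono[of U' E M] U'sub NE Eb sM by auto
      ultimately show False using U'pos by simp
    qed
  qed
qed

end
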